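(* Let $n\ge1$ and let $A\subseteq\mathbb{F}_3^n$ be such that there are no $a,b,c\in A$ with $b\neq c$ and $a+b+c=0$. Then for every integer $d\ge0$, $$|A|\le 2\,|M(n,\lfloor d/2\rfloor)|+3^n-|M(n,d)|.$$
   Context: $\mathbb{F}_3$ is the field of integers modulo $3$. For integers $n\ge1$ and $e\ge 0$, $M(n,e)$ denotes the set of monomials $x_1^{\alpha_1}\cdots x_n^{\alpha_n}$ with $0\le\alpha_i\le2$ for all $i$ and $\alpha_1+\dots+\alpha_n\le e$; thus $|M(n,e)|=\sum_{i=0}^{e}\binom{n}{i}_2$, where $\binom{n}{i}_2$ is the coefficient of $x^i$ in $(1+x+x^2)^n$. *)

theory Defs
  imports Main "HOL-Library.Numeral_Type"
begin

text \<open>Vectors in F_3^n are modelled as functions 'n => 3 for a finite index type 'n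
 with CARD('n) = n; the type 3 from Numeral_Type is the integers modulo 3.\<close>

text \<open>Monomials x_1^a_1 ... x_n^a_n with 0 <= a_i <= 2 and total degree <= e,
 identified with their exponent vectors (supported on {..<n}).\<close>
definition M :: "nat \<Rightarrow> nat \<Rightarrow> (nat \<Rightarrow> nat) set" where
  "M n e = {\<alpha>. (\<forall>i. \<alpha> i \<le> 2) \<and> (\<forall>i\<ge>n. \<alpha> i = 0) \<and> (\<Sum>i<n. \<alpha> i) \<le> e}"

end

theory Submission
  imports Defs "HOL-Library.Function_Algebras" "HOL-Library.FuncSet" "HOL.Vector_Spaces" "HOL-Library.Cardinality"
begin

lemma ex3: "(x::3) = 0 \<or> x = 1 \<or> x = 2"
proof (cases x)
  case (of_int z)
  then have "z = 0 \<or> z = 1 \<or> z = 2" by auto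
  then show ?thesis using of_int by auto
qed

typedef gf3 = "UNIV :: 3 set" by simp
setup_lifting type_definition_gf3

instantiation gf3 :: comm_ring_1 begin
lift_definition zero_gf3 :: gf3 is 0 .
lift_definition one_gf3 :: gf3 is 1 .
lift_definition plus_gf3 :: "gf3 \<Rightarrow> gf3 \<Rightarrow> gf3" is "(+)" .
lift_definition minus_gf3 :: "gf3 \<Rightarrow> gf3 \<Rightarrow> gf3" is "(-)" .
lift_definition uminus_gf3 :: "gf3 \<Rightarrow> gf3" is "uminus" .
lift_definition times_gf3 :: "gf3 \<Rightarrow> gf3 \<Rightarrow> gf3" is "(*)" .
instance
proof
  fix a b c :: gf3
  show "a * b * c = a * (b * c)" by transfer (simp add: algebra_simps)
  show "a * b = b * a" by transfer (simp add: algebra_simps)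
  show "1 * a = a" by transfer simp
  show "a + b + c = a + (b + c)" by transfer (simp add: algebra_simps)
  show "a + b = b + a" by transfer (simp add: algebra_simps)
  show "0 + a = a" by transfer simp
  show "- a + a = 0" by transfer simp
  show "a - b = a + - b" by transfer simp
  show "(a + b) * c = a * c + b * c" by transfer (simp add: algebra_simps)
  show "(0::gf3) \<noteq> 1" by transfer simp
qed
end

instantiation gf3 :: field begin
lift_definition inverse_gf3 :: "gf3 \<Rightarrow> gf3" is "\<lambda>x. x" .
lift_definition divide_gf3 :: "gf3 \<Rightarrow> gf3 \<Rightarrow> gf3" is "(*)" .
instance by standard (transfer; use ex3 in fastforce)+
end

instance gf3 :: finite
proof
  have "(UNIV::gf3 set) = range Abs_gf3" by (metis type_definition.univ type_definition_gf3)
  moreover have "finite (range Abs_gf3)" by simp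
  ultimately show "finite (UNIV::gf3 set)" by simp
qed

definition h :: "3 \<Rightarrow> gf3" where "h = Abs_gf3"

lemma h_add: "h (x + y) = h x + h y" unfolding h_def by (simp add: plus_gf3.abs_eq)
lemma h_diff: "h (x - y) = h x - h y" unfolding h_def by (simp add: minus_gf3.abs_eq)
lemma h_zero: "h x = 0 \<longleftrightarrow> x = 0" unfolding h_def
  by (metis Abs_gf3_inject UNIV_I zero_gf3.abs_eq)
lemma gf3_sq: "(z::gf3) \<noteq> 0 \<Longrightarrow> z * z = 1" by transfer (use ex3 in fastforce)
lemma three_dbl: "(t::3) + t = - t" using ex3[of t] by auto

lemma sum_app: "(sum f A) x = (\<Sum>a\<in>A. f a x)"
  by (induction A rule: infinite_finite_induct) auto

definition sc :: "gf3 \<Rightarrow> ('x \<Rightarrow> gf3) \<Rightarrow> ('x \<Rightarrow> gf3)" where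
  "sc c f = (\<lambda>x. c * f x)"

interpretation VS: vector_space sc
  by unfold_locales (auto simp: sc_def fun_eq_iff algebra_simps)

definition delta :: "'x \<Rightarrow> 'x \<Rightarrow> gf3" where
  "delta y = (\<lambda>x. if x = y then 1 else 0)"

lemma inj_delta: "inj delta"
  unfolding inj_def delta_def by (metis zero_neq_one)

lemma delta_indep: "VS.independent (range (delta :: 'x::finite \<Rightarrow> _))"
proof (rule VS.independent_if_scalars_zero)
  show "finite (range (delta :: 'x \<Rightarrow> _))" by simp
  fix f :: "('x \<Rightarrow> gf3) \<Rightarrow> gf3" and v :: "'x \<Rightarrow> gf3"
  assume s: "(\<Sum>x\<in>range delta. sc (f x) x) = 0" and v: "v \<in> range delta"
  then obtain y where y: "v = delta y" by auto
  have "0 = (\<Sum>x\<in>range (delta::'x \<Rightarrow> _). sc (f x) x) y" using s by simp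
  also have "\<dots> = (\<Sum>z\<in>UNIV. f (delta z) * delta z y)"
    by (simp add: sum_app sum.reindex[OF inj_delta] sc_def)
  also have "\<dots> = (\<Sum>z\<in>UNIV. if z = y then f (delta y) else 0)"
    by (rule sum.cong) (auto simp: delta_def)
  also have "\<dots> = f (delta y)" by simp
  finally show "f v = 0" using y by simp
qed

lemma delta_span: "f \<in> VS.span (range (delta :: 'x::finite \<Rightarrow> _))"
proof -
  have "f = (\<Sum>y\<in>UNIV. sc (f y) (delta y))"
  proof
    fix x
    have "(\<Sum>y\<in>UNIV. sc (f y) (delta y)) x = (\<Sum>y\<in>UNIV. if y = x then f x else 0)"
      unfolding sum_app sc_def delta_def by (rule sum.cong) auto
    then show "f x = (\<Sum>y\<in>UNIV. sc (f y) (delta y)) x" by simp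
  qed
  also have "\<dots> \<in> VS.span (range delta)"
    by (intro VS.span_sum VS.span_scale VS.span_base) auto
  finally show ?thesis .
qed

interpretation FS: finite_dimensional_vector_space "sc :: gf3 \<Rightarrow> ('x::finite \<Rightarrow> gf3) \<Rightarrow> _" "range delta"
proof unfold_locales
  show "finite (range (delta::'x \<Rightarrow> _))" by simp
  show "VS.independent (range (delta::'x \<Rightarrow> _))" by (rule delta_indep)
  show "VS.span (range (delta::'x \<Rightarrow> _)) = UNIV" using delta_span by blast
qed

lemma FS_dim_UNIV: "VS.dim (UNIV :: ('x::finite \<Rightarrow> gf3) set) = CARD('x)"
  by (simp add: card_image inj_delta)

definition vanish :: "('x \<Rightarrow> gf3) set \<Rightarrow> 'x set \<Rightarrow> ('x \<Rightarrow> gf3) set" where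
  "vanish W S = {w\<in>W. \<forall>x\<in>S. w x = 0}"

lemma subspace_vanish: "VS.subspace W \<Longrightarrow> VS.subspace (vanish W S)"
  unfolding VS.subspace_def vanish_def sc_def by simp

lemma vanish_insert: "vanish W (insert x S) = vanish (vanish W S) {x}"
  unfolding vanish_def by auto

lemma dim_vanish1:
  fixes W :: "('x::finite \<Rightarrow> gf3) set"
  assumes W: "VS.subspace W"
  shows "VS.dim W \<le> VS.dim (vanish W {x}) + 1"
proof (cases "\<forall>w\<in>W. w x = 0")
  case True
  then have "vanish W {x} = W" unfolding vanish_def by auto
  then show ?thesis by simp
next
  case False
  then obtain u where u: "u \<in> W" "u x \<noteq> 0" by auto
  have "W \<subseteq> VS.span (insert u (vanish W {x}))"
  proof
    fix w assume w: "w \<in> W"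
    let ?c = "w x / u x"
    have "w - sc ?c u \<in> W"
      using w u W by (simp add: VS.subspace_diff VS.subspace_scale)
    moreover have "(w - sc ?c u) x = 0" using u(2) by (simp add: sc_def)
    ultimately have "w - sc ?c u \<in> vanish W {x}"
      unfolding vanish_def by simp
    then have "w - sc ?c u \<in> VS.span (insert u (vanish W {x}))"
      by (intro VS.span_base) simp
    moreover have "sc ?c u \<in> VS.span (insert u (vanish W {x}))"
      by (intro VS.span_scale VS.span_base) simp
    ultimately have "(w - sc ?c u) + sc ?c u \<in> VS.span (insert u (vanish W {x}))"
      by (rule VS.span_add)
    then show "w \<in> VS.span (insert u (vanish W {x}))" by simp
  qed
  then have "VS.dim W \<le> VS.dim (insert u (vanish W {x}))" by (rule FS.dim_mono)
  also have "\<dots> \<le> VS.dim (vanish W {x}) + 1" by (simp add: FS.dim_insert)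
  finally show ?thesis .
qed

lemma dim_vanish:
  fixes W :: "('x::finite \<Rightarrow> gf3) set"
  assumes W: "VS.subspace W"
  shows "VS.dim W \<le> VS.dim (vanish W S) + card S"
proof -
  have "finite S" by simp
  then show ?thesis
  proof (induction S rule: finite_induct)
    case empty
    have "vanish W {} = W" unfolding vanish_def by auto
    then show ?case by (metis order_refl card.empty add_0_right)
  next
    case (insert x S)
    have "VS.dim (vanish W S) \<le> VS.dim (vanish W (insert x S)) + 1"
      unfolding vanish_insert[of W x S] by (rule dim_vanish1[OF subspace_vanish[OF W]])
    moreover have "card (insert x S) = card S + 1" using insert(1,2) by simp
    ultimately show ?case using insert(3) by linarith
  qed
qed

lemma support_exists:
  fixes W :: "('x::finite \<Rightarrow> gf3) set"
  assumes W: "VS.subspace W"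
  shows "\<exists>w\<in>W. VS.dim W \<le> card {x. w x \<noteq> 0}"
proof -
  define s where "s = (\<lambda>w::'x\<Rightarrow>gf3. card {x. w x \<noteq> 0})"
  have fin: "finite (s ` W)" by (rule finite_imageI) (rule finite_subset[OF subset_UNIV], simp)
  have "0 \<in> W" using W VS.subspace_0 by blast
  then have ne: "s ` W \<noteq> {}" by blast
  have "Max (s ` W) \<in> s ` W" by (rule Max_in[OF fin ne])
  then obtain w where w: "w \<in> W" "s w = Max (s ` W)" by auto
  have wmax: "s v \<le> s w" if "v \<in> W" for v
    using w(2) Max_ge[OF fin] that by auto
  show ?thesis
  proof (rule ccontr)
    assume "\<not> ?thesis"
    then have "\<not> VS.dim W \<le> s w" using w(1) unfolding s_def by blast
    then have lt: "s w < VS.dim W" by linarith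
    define T where "T = {x. w x \<noteq> 0}"
    have "VS.dim W \<le> VS.dim (vanish W T) + card T" by (rule dim_vanish[OF W])
    moreover have "card T = s w" unfolding T_def s_def by simp
    ultimately have "VS.dim (vanish W T) \<noteq> 0" using lt by linarith
    have "\<not> vanish W T \<subseteq> {0}"
    proof
      assume "vanish W T \<subseteq> {0}"
      then have "VS.dim (vanish W T) = 0" by (rule FS.dim_eq_0[THEN iffD2])
      with \<open>VS.dim (vanish W T) \<noteq> 0\<close> show False by blast
    qed
    then obtain v where v: "v \<in> vanish W T" "v \<noteq> 0" by blast
    then have vW: "v \<in> W" and vT: "\<And>x. w x \<noteq> 0 \<Longrightarrow> v x = 0"
      unfolding vanish_def T_def by auto
    have "\<exists>y. v y \<noteq> 0"
    proof (rule ccontr)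
      assume "\<not> (\<exists>y. v y \<noteq> 0)"
      then have "v = 0" by (intro ext) simp
      with v(2) show False by blast
    qed
    then obtain y where y: "v y \<noteq> 0" by blast
    have wv: "w + v \<in> W" using w(1) vW W VS.subspace_add by blast
    have sub: "insert y T \<subseteq> {x. (w + v) x \<noteq> 0}"
    proof
      fix z assume "z \<in> insert y T"
      then show "z \<in> {x. (w + v) x \<noteq> 0}"
      proof
        assume "z = y"
        then have "w z = 0" using vT y by blast
        then show ?thesis using y \<open>z = y\<close> by simp
      next
        assume "z \<in> T"
        then have "w z \<noteq> 0" "v z = 0" using vT unfolding T_def by auto
        then show ?thesis by simp
      qed
    qed
    have "y \<notin> T" using vT y unfolding T_def by blast
    then have "card (insert y T) = card T + 1" by simp
    moreover have "card (insert y T) \<le> s (w + v)" unfolding s_def by (rule card_mono[OF _ sub]) simp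
    ultimately show False using wmax[OF wv] \<open>card T = s w\<close> by linarith
  qed
qed

definition mon :: "('n \<Rightarrow> nat) \<Rightarrow> ('n \<Rightarrow> 3) \<Rightarrow> gf3" where
  "mon \<alpha> x = (\<Prod>i\<in>UNIV. h (x i) ^ \<alpha> i)"

definition Efull :: "('n \<Rightarrow> nat) set" where
  "Efull = {\<alpha>. \<forall>i. \<alpha> i \<le> 2}"

definition Ef :: "nat \<Rightarrow> ('n \<Rightarrow> nat) set" where
  "Ef e = {\<alpha>. (\<forall>i. \<alpha> i \<le> 2) \<and> (\<Sum>i\<in>UNIV. \<alpha> i) \<le> e}"

lemma Efull_PiE: "Efull = PiE UNIV (\<lambda>_. {..2::nat})"
  unfolding Efull_def PiE_UNIV_domain by auto

lemma card_Efull: "card (Efull :: ('n::finite \<Rightarrow> nat) set) = 3 ^ CARD('n)"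
  unfolding Efull_PiE by (simp add: card_PiE)

lemma finite_Efull: "finite (Efull :: ('n::finite \<Rightarrow> nat) set)"
  unfolding Efull_PiE by (simp add: finite_PiE)

lemma Ef_sub: "Ef e \<subseteq> Efull" unfolding Ef_def Efull_def by auto

lemma finite_Ef: "finite (Ef e :: ('n::finite \<Rightarrow> nat) set)"
  using finite_subset[OF Ef_sub finite_Efull] .

definition cc :: "gf3 \<Rightarrow> nat \<Rightarrow> gf3" where
  "cc v k = (if k = 0 then 1 - v * v else if k = 1 then 2 * v else - 1)"

lemma cc_expand: "1 - (u - v) * (u - v) = (\<Sum>k\<le>2. cc v k * u ^ k)"
  by (simp add: cc_def numeral_2_eq_2 algebra_simps)

lemma delta_prod: "delta (y::'n::finite \<Rightarrow> 3) x = (\<Prod>i\<in>UNIV. 1 - (h (x i) - h (y i)) * (h (x i) - h (y i)))"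
proof (cases "x = y")
  case True
  then show ?thesis by (simp add: delta_def)
next
  case False
  then obtain i where i: "x i \<noteq> y i" by auto
  have "h (x i) - h (y i) \<noteq> 0" using i h_zero[of "x i - y i"] by (simp add: h_diff)
  then have "1 - (h (x i) - h (y i)) * (h (x i) - h (y i)) = 0" using gf3_sq by simp
  then have "(\<Prod>i\<in>UNIV. 1 - (h (x i) - h (y i)) * (h (x i) - h (y i))) = 0"
    by (intro prod_zero) auto
  then show ?thesis using False by (simp add: delta_def)
qed

lemma delta_in_span: "delta (y :: 'n::finite \<Rightarrow> 3) \<in> VS.span (mon ` Efull)"
proof -
  let ?c = "\<lambda>g. \<Prod>i\<in>UNIV. cc (h (y i)) (g i)"
  have "delta y = (\<Sum>g\<in>Efull. sc (?c g) (mon g))"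
  proof
    fix x
    have "delta y x = (\<Prod>i\<in>UNIV. \<Sum>k\<le>2. cc (h (y i)) k * h (x i) ^ k)"
      unfolding delta_prod cc_expand ..
    also have "\<dots> = (\<Sum>g\<in>PiE UNIV (\<lambda>_. {..2::nat}). \<Prod>i\<in>UNIV. cc (h (y i)) (g i) * h (x i) ^ g i)"
      by (rule prod_sum_PiE) auto
    also have "\<dots> = (\<Sum>g\<in>Efull. ?c g * mon g x)"
      unfolding Efull_PiE mon_def by (simp add: prod.distrib)
    also have "\<dots> = (\<Sum>g\<in>Efull. sc (?c g) (mon g)) x"
      by (simp add: sum_app sc_def)
    finally show "delta y x = (\<Sum>g\<in>Efull. sc (?c g) (mon g)) x" .
  qed
  also have "\<dots> \<in> VS.span (mon ` Efull)"
    by (intro VS.span_sum VS.span_scale VS.span_base) auto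
  finally show ?thesis .
qed

lemma span_mono_all: "VS.span (mon ` (Efull :: ('n::finite \<Rightarrow> nat) set)) = UNIV"
proof -
  have "range (delta :: ('n \<Rightarrow> 3) \<Rightarrow> _) \<subseteq> VS.span (mon ` Efull)"
    using delta_in_span by blast
  then have "VS.span (range (delta :: ('n \<Rightarrow> 3) \<Rightarrow> _)) \<subseteq> VS.span (mon ` Efull)"
    using VS.span_mono VS.span_span by metis
  moreover have "VS.span (range (delta :: ('n \<Rightarrow> 3) \<Rightarrow> _)) = UNIV"
    using delta_span by blast
  ultimately show ?thesis by blast
qed

lemma card_fun3: "CARD('n::finite \<Rightarrow> 3) = 3 ^ CARD('n)"
  by (simp add: card_fun)

lemma mono_indep_inj:
  shows "VS.independent (mon ` (Efull :: ('n::finite \<Rightarrow> nat) set)) \<and> inj_on mon (Efull :: ('n \<Rightarrow> nat) set)"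
proof -
  let ?B = "mon ` (Efull :: ('n \<Rightarrow> nat) set)"
  have fB: "finite ?B" using finite_Efull by simp
  have d: "VS.dim (UNIV :: (('n \<Rightarrow> 3) \<Rightarrow> gf3) set) = 3 ^ CARD('n)"
    using FS_dim_UNIV card_fun3 by metis
  have "VS.dim (UNIV :: (('n \<Rightarrow> 3) \<Rightarrow> gf3) set) \<le> card ?B"
    by (rule VS.dim_le_card) (use span_mono_all fB in auto)
  moreover have "card ?B \<le> card (Efull :: ('n \<Rightarrow> nat) set)"
    by (rule card_image_le[OF finite_Efull])
  ultimately have cB: "card ?B = card (Efull :: ('n \<Rightarrow> nat) set)" using d card_Efull[where 'n='n] by simp
  have "VS.independent ?B"
    by (rule FS.card_le_dim_spanning[of _ UNIV]) (use span_mono_all fB cB d card_Efull[where 'n='n] in auto)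
  moreover have "inj_on mon (Efull :: ('n \<Rightarrow> nat) set)"
    using cB inj_on_iff_eq_card finite_Efull by blast
  ultimately show ?thesis by blast
qed

lemma dim_span_D: "VS.dim (VS.span (mon ` (Ef e :: ('n::finite \<Rightarrow> nat) set))) = card (Ef e :: ('n \<Rightarrow> nat) set)"
proof -
  have "VS.independent (mon ` (Ef e :: ('n \<Rightarrow> nat) set))"
    using mono_indep_inj VS.independent_mono Ef_sub by (metis image_mono)
  then have "VS.dim (VS.span (mon ` (Ef e :: ('n \<Rightarrow> nat) set))) = card (mon ` (Ef e :: ('n \<Rightarrow> nat) set))"
    by (rule VS.dim_span_eq_card_independent)
  also have "\<dots> = card (Ef e :: ('n \<Rightarrow> nat) set)"
    using mono_indep_inj inj_on_subset[OF _ Ef_sub] card_image by metis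
  finally show ?thesis .
qed

definition splitp :: "nat \<Rightarrow> (('n::finite \<Rightarrow> 3) \<Rightarrow> gf3) \<Rightarrow> bool" where
  "splitp k f \<longleftrightarrow> (\<exists>F G. \<forall>a t. f (a + t) = (\<Sum>\<beta>\<in>Ef k. mon \<beta> a * F \<beta> t) + (\<Sum>\<gamma>\<in>Ef k. G \<gamma> a * mon \<gamma> t))"

lemma subspace_splitp: "VS.subspace {f :: ('n::finite \<Rightarrow> 3) \<Rightarrow> gf3. splitp k f}"
  unfolding VS.subspace_def
proof (intro conjI ballI allI)
  show "0 \<in> {f. splitp k f}"
    unfolding splitp_def by (auto intro!: exI[of _ "\<lambda>_ _. 0"])
next
  fix f g :: "('n \<Rightarrow> 3) \<Rightarrow> gf3" assume "f \<in> {f. splitp k f}" "g \<in> {f. splitp k f}"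
  then obtain F1 G1 F2 G2 where
    1: "\<forall>a t. f (a + t) = (\<Sum>\<beta>\<in>Ef k. mon \<beta> a * F1 \<beta> t) + (\<Sum>\<gamma>\<in>Ef k. G1 \<gamma> a * mon \<gamma> t)" and
    2: "\<forall>a t. g (a + t) = (\<Sum>\<beta>\<in>Ef k. mon \<beta> a * F2 \<beta> t) + (\<Sum>\<gamma>\<in>Ef k. G2 \<gamma> a * mon \<gamma> t)"
    unfolding splitp_def by auto
  show "f + g \<in> {f. splitp k f}"
    unfolding splitp_def
    by (rule CollectI, rule exI[of _ "\<lambda>b t. F1 b t + F2 b t"], rule exI[of _ "\<lambda>b a. G1 b a + G2 b a"])
       (simp add: 1 2 sum.distrib algebra_simps)
next
  fix c and f :: "('n \<Rightarrow> 3) \<Rightarrow> gf3" assume "f \<in> {f. splitp k f}"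
  then obtain F1 G1 where
    1: "\<forall>a t. f (a + t) = (\<Sum>\<beta>\<in>Ef k. mon \<beta> a * F1 \<beta> t) + (\<Sum>\<gamma>\<in>Ef k. G1 \<gamma> a * mon \<gamma> t)"
    unfolding splitp_def by auto
  show "sc c f \<in> {f. splitp k f}"
    unfolding splitp_def
    by (rule CollectI, rule exI[of _ "\<lambda>b t. c * F1 b t"], rule exI[of _ "\<lambda>b a. c * G1 b a"])
       (simp add: 1 sc_def sum_distrib_left algebra_simps)
qed

definition cf :: "('n \<Rightarrow> nat) \<Rightarrow> ('n \<Rightarrow> nat) \<Rightarrow> gf3" where
  "cf \<alpha> \<beta> = (\<Prod>i\<in>UNIV. of_nat (\<alpha> i choose \<beta> i))"

definition sub :: "('n \<Rightarrow> nat) \<Rightarrow> ('n \<Rightarrow> nat) \<Rightarrow> ('n \<Rightarrow> nat)" where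
  "sub \<alpha> \<beta> = (\<lambda>i. \<alpha> i - \<beta> i)"

lemma mon_expand:
  fixes \<alpha> :: "'n::finite \<Rightarrow> nat"
  shows "mon \<alpha> (a + t) = (\<Sum>\<beta>\<in>PiE UNIV (\<lambda>i. {..\<alpha> i}). cf \<alpha> \<beta> * mon \<beta> a * mon (sub \<alpha> \<beta>) t)"
proof -
  have "mon \<alpha> (a + t) = (\<Prod>i\<in>UNIV. (h (a i) + h (t i)) ^ \<alpha> i)"
    unfolding mon_def by (simp add: h_add)
  also have "\<dots> = (\<Prod>i\<in>UNIV. \<Sum>k\<le>\<alpha> i. of_nat (\<alpha> i choose k) * h (a i) ^ k * h (t i) ^ (\<alpha> i - k))"
    by (simp add: binomial_ring)
  also have "\<dots> = (\<Sum>\<beta>\<in>PiE UNIV (\<lambda>i. {..\<alpha> i}). \<Prod>i\<in>UNIV. of_nat (\<alpha> i choose \<beta> i) * h (a i) ^ \<beta> i * h (t i) ^ (\<alpha> i - \<beta> i))"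
    by (rule prod_sum_PiE) auto
  also have "\<dots> = (\<Sum>\<beta>\<in>PiE UNIV (\<lambda>i. {..\<alpha> i}). cf \<alpha> \<beta> * mon \<beta> a * mon (sub \<alpha> \<beta>) t)"
    unfolding cf_def mon_def sub_def by (simp add: prod.distrib)
  finally show ?thesis .
qed

lemma sum_sub: "(\<forall>i. \<gamma> i \<le> \<alpha> i) \<Longrightarrow> (\<Sum>i\<in>UNIV. \<gamma> i) + (\<Sum>i\<in>UNIV. sub \<alpha> \<gamma> i) = (\<Sum>i\<in>UNIV. (\<alpha> i :: nat))"
  unfolding sub_def sum.distrib[symmetric] by (rule sum.cong) auto

lemma mon_split:
  fixes \<alpha> :: "'n::finite \<Rightarrow> nat"
  assumes \<alpha>: "\<alpha> \<in> Ef d"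
  shows "splitp (d div 2) (mon \<alpha>)"
proof -
  define k where "k = d div 2"
  define P where "P = PiE UNIV (\<lambda>i. {..\<alpha> i})"
  have a2: "\<forall>i. \<alpha> i \<le> 2" and ad: "(\<Sum>i\<in>UNIV. \<alpha> i) \<le> d" using \<alpha> unfolding Ef_def by auto
  have Pc: "\<beta> \<in> P \<longleftrightarrow> (\<forall>i. \<beta> i \<le> \<alpha> i)" for \<beta>
    unfolding P_def PiE_UNIV_domain by auto
  have PE: "P \<subseteq> Efull" using a2 Pc unfolding Efull_def by (auto intro: order_trans)
  have EkE: "Ef k \<subseteq> Efull" by (rule Ef_sub)
  have inv: "sub \<alpha> (sub \<alpha> \<gamma>) = \<gamma>" if "\<gamma> \<in> P" for \<gamma>
    using that Pc unfolding sub_def by auto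
  have subP: "sub \<alpha> \<gamma> \<in> P" if "\<gamma> \<in> P" for \<gamma>
    using that Pc unfolding sub_def by auto
  define F where "F = (\<lambda>\<beta> t. if \<beta> \<in> P then cf \<alpha> \<beta> * mon (sub \<alpha> \<beta>) t else 0)"
  define G where "G = (\<lambda>\<gamma> a. if \<gamma> \<in> P \<and> \<not> (\<Sum>i\<in>UNIV. sub \<alpha> \<gamma> i) \<le> k
                        then cf \<alpha> (sub \<alpha> \<gamma>) * mon (sub \<alpha> \<gamma>) a else 0)"
  show ?thesis
    unfolding splitp_def k_def[symmetric]
  proof (intro exI allI)
    fix a t :: "'n \<Rightarrow> 3"
    define T where "T = (\<lambda>\<beta>. cf \<alpha> \<beta> * mon \<beta> a * mon (sub \<alpha> \<beta>) t)"
    have "mon \<alpha> (a + t) = (\<Sum>\<beta>\<in>P. T \<beta>)" unfolding P_def T_def by (rule mon_expand)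
    also have "\<dots> = (\<Sum>\<beta>\<in>P. if (\<Sum>i\<in>UNIV. \<beta> i) \<le> k then T \<beta> else 0)
                   + (\<Sum>\<beta>\<in>P. if (\<Sum>i\<in>UNIV. \<beta> i) \<le> k then 0 else T \<beta>)"
      by (simp add: sum.distrib[symmetric] if_distrib cong: if_cong)
    also have "(\<Sum>\<beta>\<in>P. if (\<Sum>i\<in>UNIV. \<beta> i) \<le> k then T \<beta> else 0) = (\<Sum>\<beta>\<in>Ef k. mon \<beta> a * F \<beta> t)"
    proof -
      have "(\<Sum>\<beta>\<in>P. if (\<Sum>i\<in>UNIV. \<beta> i) \<le> k then T \<beta> else 0)
          = (\<Sum>\<beta>\<in>Efull. if \<beta> \<in> P \<and> (\<Sum>i\<in>UNIV. \<beta> i) \<le> k then T \<beta> else 0)"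
        by (rule sum.mono_neutral_cong_left[OF finite_Efull PE]) auto
      also have "\<dots> = (\<Sum>\<beta>\<in>Ef k. mon \<beta> a * F \<beta> t)"
        by (rule sum.mono_neutral_cong_right[OF finite_Efull EkE])
           (auto simp: F_def T_def Ef_def Efull_def)
      finally show ?thesis .
    qed
    also have "(\<Sum>\<beta>\<in>P. if (\<Sum>i\<in>UNIV. \<beta> i) \<le> k then 0 else T \<beta>)
             = (\<Sum>\<gamma>\<in>P. if (\<Sum>i\<in>UNIV. sub \<alpha> \<gamma> i) \<le> k then 0 else T (sub \<alpha> \<gamma>))"
      by (rule sum.reindex_bij_witness[of _ "sub \<alpha>" "sub \<alpha>"]) (simp_all add: inv subP)
    also have "\<dots> = (\<Sum>\<gamma>\<in>Ef k. G \<gamma> a * mon \<gamma> t)"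
    proof -
      have "(\<Sum>\<gamma>\<in>P. if (\<Sum>i\<in>UNIV. sub \<alpha> \<gamma> i) \<le> k then 0 else T (sub \<alpha> \<gamma>))
          = (\<Sum>\<gamma>\<in>Efull. if \<gamma> \<in> P \<and> \<not> (\<Sum>i\<in>UNIV. sub \<alpha> \<gamma> i) \<le> k then T (sub \<alpha> \<gamma>) else 0)"
        by (rule sum.mono_neutral_cong_left[OF finite_Efull PE]) auto
      also have "\<dots> = (\<Sum>\<gamma>\<in>Ef k. G \<gamma> a * mon \<gamma> t)"
      proof (rule sum.mono_neutral_cong_right[OF finite_Efull EkE])
        show "\<forall>\<gamma>\<in>(Efull::('n\<Rightarrow>nat) set) - Ef k. (if \<gamma> \<in> P \<and> \<not> (\<Sum>i\<in>UNIV. sub \<alpha> \<gamma> i) \<le> k then T (sub \<alpha> \<gamma>) else 0) = 0"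
        proof
          fix \<gamma> :: "'n \<Rightarrow> nat" assume g: "\<gamma> \<in> Efull - Ef k"
          show "(if \<gamma> \<in> P \<and> \<not> (\<Sum>i\<in>UNIV. sub \<alpha> \<gamma> i) \<le> k then T (sub \<alpha> \<gamma>) else 0) = 0"
          proof (rule ccontr)
            assume "\<not> ?thesis"
            then have gP: "\<gamma> \<in> P" and gs: "\<not> (\<Sum>i\<in>UNIV. sub \<alpha> \<gamma> i) \<le> k"
              by (auto split: if_splits)
            have "(\<Sum>i\<in>UNIV. \<gamma> i) + (\<Sum>i\<in>UNIV. sub \<alpha> \<gamma> i) \<le> d"
              using sum_sub[of \<gamma> \<alpha>] gP Pc ad by simp
            then have "(\<Sum>i\<in>UNIV. \<gamma> i) \<le> k" using gs unfolding k_def by linarith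
            then show False using g unfolding Ef_def Efull_def by auto
          qed
        qed
      next
        fix \<gamma> :: "'n \<Rightarrow> nat" assume "\<gamma> \<in> Ef k"
        show "(if \<gamma> \<in> P \<and> \<not> (\<Sum>i\<in>UNIV. sub \<alpha> \<gamma> i) \<le> k then T (sub \<alpha> \<gamma>) else 0) = G \<gamma> a * mon \<gamma> t"
        proof (cases "\<gamma> \<in> P")
          case True
          then have "sub \<alpha> (sub \<alpha> \<gamma>) = \<gamma>" using Pc unfolding sub_def by auto
          then show ?thesis unfolding G_def T_def by simp
        next
          case False
          then show ?thesis unfolding G_def by simp
        qed
      qed
      finally show ?thesis .
    qed
    finally show "mon \<alpha> (a + t) = (\<Sum>\<beta>\<in>Ef k. mon \<beta> a * F \<beta> t) + (\<Sum>\<gamma>\<in>Ef k. G \<gamma> a * mon \<gamma> t)" .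
  qed
qed

lemma card_Ef_M: "card (Ef e :: ('n::finite \<Rightarrow> nat) set) = card (M CARD('n) e)"
proof -
  define N where "N = CARD('n)"
  obtain idx :: "'n \<Rightarrow> nat" where bij0: "bij_betw idx UNIV {0..<N}"
    using ex_bij_betw_finite_nat[of "UNIV :: 'n set"] unfolding N_def by auto
  then have bij: "bij_betw idx UNIV {..<N}" by (simp add: atLeast0LessThan)
  define iv where "iv = the_inv_into UNIV idx"
  have inj: "inj idx" using bij bij_betw_def by blast
  have iv1: "iv (idx i) = i" for i unfolding iv_def by (rule the_inv_into_f_f[OF inj]) simp
  have iv2: "j < N \<Longrightarrow> idx (iv j) = j" for j unfolding iv_def
    by (rule f_the_inv_into_f_bij_betw[OF bij]) simp
  have idxN: "idx i < N" for i using bij bij_betwE by blast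
  define \<phi> where "\<phi> = (\<lambda>(\<alpha>::'n \<Rightarrow> nat) j. if j < N then \<alpha> (iv j) else 0)"
  define \<psi> where "\<psi> = (\<lambda>(\<beta>::nat \<Rightarrow> nat) i. \<beta> (idx i))"
  have sumeq: "(\<Sum>j<N. \<beta> j) = (\<Sum>i\<in>UNIV. \<beta> (idx i))" for \<beta> :: "nat \<Rightarrow> nat"
    using sum.reindex_bij_betw[OF bij, of \<beta>] by simp
  have "bij_betw \<phi> (Ef e) (M N e)"
  proof (rule bij_betw_byWitness[of _ \<psi>])
    show "\<forall>a\<in>Ef e. \<psi> (\<phi> a) = a" unfolding \<phi>_def \<psi>_def by (auto simp: idxN iv1)
    show "\<forall>a'\<in>M N e. \<phi> (\<psi> a') = a'" unfolding \<phi>_def \<psi>_def M_def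
      by (auto simp: iv2 fun_eq_iff)
    show "\<phi> ` Ef e \<subseteq> M N e"
    proof
      fix \<beta> assume "\<beta> \<in> \<phi> ` Ef e"
      then obtain \<alpha> where \<alpha>: "\<alpha> \<in> Ef e" "\<beta> = \<phi> \<alpha>" by auto
      have "(\<Sum>j<N. \<beta> j) = (\<Sum>i\<in>UNIV. \<alpha> i)"
        unfolding sumeq \<alpha>(2) \<phi>_def by (simp add: idxN iv1)
      then show "\<beta> \<in> M N e" using \<alpha> unfolding M_def Ef_def \<phi>_def by auto
    qed
    show "\<psi> ` M N e \<subseteq> Ef e"
    proof
      fix \<alpha> assume "\<alpha> \<in> \<psi> ` M N e"
      then obtain \<beta> where \<beta>: "\<beta> \<in> M N e" "\<alpha> = \<psi> \<beta>" by auto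
      have "(\<Sum>i\<in>UNIV. \<alpha> i) = (\<Sum>j<N. \<beta> j)"
        unfolding sumeq \<beta>(2) \<psi>_def ..
      then show "\<alpha> \<in> Ef e" using \<beta> unfolding M_def Ef_def \<psi>_def by auto
    qed
  qed
  then show ?thesis unfolding N_def by (rule bij_betw_same_card)
qed

lemma span_splitp:
  fixes P :: "('n::finite \<Rightarrow> 3) \<Rightarrow> gf3"
  assumes "P \<in> VS.span (mon ` Ef d)"
  shows "splitp (d div 2) P"
proof -
  have "P \<in> {f. splitp (d div 2) f}"
    using assms
  proof (induction rule: VS.span_induct)
    case base show ?case using subspace_splitp[of "d div 2"] by simp
  next
    case (step x) then show ?case using mon_split by auto
  qed
  then show ?thesis by simp
qed

definition neg :: "('n \<Rightarrow> 3) \<Rightarrow> ('n \<Rightarrow> 3)" where "neg a = (\<lambda>i. - a i)"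

lemma inj_neg: "inj neg" unfolding inj_def neg_def by (simp add: fun_eq_iff)

lemma rank_bound:
  fixes A :: "('n::finite \<Rightarrow> 3) set" and P :: "('n \<Rightarrow> 3) \<Rightarrow> gf3"
  assumes cap: "\<forall>a\<in>A. \<forall>b\<in>A. \<forall>c\<in>A. b \<noteq> c \<longrightarrow> (\<lambda>i. a i + b i + c i) \<noteq> (\<lambda>i. 0)"
    and van: "\<And>x. x \<notin> neg ` A \<Longrightarrow> P x = 0"
    and sp: "splitp k P"
  shows "card {a\<in>A. P (neg a) \<noteq> 0} \<le> 2 * card (Ef k :: ('n \<Rightarrow> nat) set)"
proof -
  define T where "T = {a\<in>A. P (neg a) \<noteq> 0}"
  obtain F G where FG: "\<And>a t. P (a + t) = (\<Sum>\<beta>\<in>Ef k. mon \<beta> a * F \<beta> t) + (\<Sum>\<gamma>\<in>Ef k. G \<gamma> a * mon \<gamma> t)"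
    using sp unfolding splitp_def by blast
  define col where "col t = (\<lambda>a. if a \<in> T then P (a + t) else 0)" for t
  have col_eq: "col t a = (if a = t then P (neg t) else 0)" if t: "t \<in> T" and a: "a \<in> T" for t a
  proof (cases "a = t")
    case True
    have "t + t = neg t" unfolding neg_def by (rule ext) (simp only: plus_fun_apply three_dbl)
    then show ?thesis using True a unfolding col_def by simp
  next
    case False
    have "a + t \<notin> neg ` A"
    proof
      assume "a + t \<in> neg ` A"
      then obtain c where c: "c \<in> A" "a + t = neg c" by auto
      then have "(\<lambda>i. c i + a i + t i) = (\<lambda>i. 0)"
        unfolding neg_def by (auto simp: fun_eq_iff) (metis add.commute add.left_inverse add.assoc)
      then show False using cap c(1) a t False unfolding T_def by blast
    qed
    then show ?thesis using False a unfolding col_def by (simp add: van)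
  qed
  have Pt: "P (neg t) \<noteq> 0" if "t \<in> T" for t using that unfolding T_def by auto
  have injc: "inj_on col T"
  proof (rule inj_onI)
    fix s t assume st: "s \<in> T" "t \<in> T" "col s = col t"
    then have "col s s = col t s" by simp
    then show "s = t" using col_eq[OF st(1) st(1)] col_eq[OF st(2) st(1)] Pt[OF st(1)]
      by (auto split: if_splits)
  qed
  have finT: "finite T" by simp
  have indep: "VS.independent (col ` T)"
  proof (rule VS.independent_if_scalars_zero)
    show "finite (col ` T)" by simp
    fix f :: "(('n \<Rightarrow> 3) \<Rightarrow> gf3) \<Rightarrow> gf3" and v
    assume s: "(\<Sum>x\<in>col ` T. sc (f x) x) = 0" and v: "v \<in> col ` T"
    then obtain t where t: "t \<in> T" "v = col t" by auto
    have "0 = (\<Sum>x\<in>col ` T. sc (f x) x) t" using s by simp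
    also have "\<dots> = (\<Sum>s\<in>T. f (col s) * col s t)"
      by (simp add: sum_app sum.reindex[OF injc] sc_def)
    also have "\<dots> = (\<Sum>s\<in>T. if s = t then f (col t) * P (neg t) else 0)"
      by (rule sum.cong) (auto simp: col_eq t(1))
    also have "\<dots> = f (col t) * P (neg t)" using t(1) finT by simp
    finally show "f v = 0" using Pt[OF t(1)] t(2) by simp
  qed
  define Gs where "Gs = (\<lambda>\<beta> a. if a \<in> T then mon \<beta> a else 0) ` Ef k \<union> (\<lambda>\<gamma> a. if a \<in> T then G \<gamma> a else 0) ` Ef k"
  have finGs: "finite Gs" unfolding Gs_def using finite_Ef by simp
  have cardGs: "card Gs \<le> 2 * card (Ef k :: ('n \<Rightarrow> nat) set)"
  proof -
    have "card Gs \<le> card ((\<lambda>\<beta> a. if a \<in> T then mon \<beta> a else 0) ` Ef k) + card ((\<lambda>\<gamma> a. if a \<in> T then G \<gamma> a else 0) ` Ef k)"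
      unfolding Gs_def by (rule card_Un_le)
    also have "\<dots> \<le> card (Ef k :: ('n \<Rightarrow> nat) set) + card (Ef k :: ('n \<Rightarrow> nat) set)"
      by (intro add_mono card_image_le finite_Ef)
    finally show ?thesis by simp
  qed
  have colspan: "col ` T \<subseteq> VS.span Gs"
  proof
    fix v assume "v \<in> col ` T"
    then obtain t where t: "v = col t" by auto
    have "col t = (\<Sum>\<beta>\<in>Ef k. sc (F \<beta> t) (\<lambda>a. if a \<in> T then mon \<beta> a else 0))
               + (\<Sum>\<gamma>\<in>Ef k. sc (mon \<gamma> t) (\<lambda>a. if a \<in> T then G \<gamma> a else 0))"
      unfolding col_def by (auto simp: fun_eq_iff sum_app sc_def FG mult.commute)
    also have "\<dots> \<in> VS.span Gs"
      by (intro VS.span_add VS.span_sum VS.span_scale VS.span_base) (auto simp: Gs_def)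
    finally show "v \<in> VS.span Gs" using t by simp
  qed
  have "card (col ` T) \<le> card Gs"
    using VS.independent_span_bound[OF finGs indep colspan] by simp
  then have "card T \<le> card Gs" using card_image[OF injc] by simp
  then show ?thesis using cardGs unfolding T_def by simp
qed

theorem mainTheorem5:
  fixes A :: "('n::finite \<Rightarrow> 3) set" and d :: nat
  assumes "\<forall>a\<in>A. \<forall>b\<in>A. \<forall>c\<in>A. b \<noteq> c \<longrightarrow> (\<lambda>i. a i + b i + c i) \<noteq> (\<lambda>i. 0)"
  shows "int (card A) \<le> 2 * int (card (M CARD('n) (d div 2))) + 3 ^ CARD('n) - int (card (M CARD('n) d))"
proof -
  define N where "N = CARD('n)"
  define S where "S = UNIV - neg ` A"
  define W0 where "W0 = VS.span (mon ` (Ef d :: ('n \<Rightarrow> nat) set))"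
  define W where "W = vanish W0 S"
  have W0s: "VS.subspace W0" unfolding W0_def by (rule VS.subspace_span)
  have Ws: "VS.subspace W" unfolding W_def by (rule subspace_vanish[OF W0s])
  have "VS.dim W0 \<le> VS.dim W + card S" unfolding W_def by (rule dim_vanish[OF W0s])
  moreover have "VS.dim W0 = card (M N d)" unfolding W0_def N_def
    by (simp only: dim_span_D card_Ef_M)
  moreover have cS: "card S = 3 ^ N - card A"
  proof -
    have "card S = CARD('n \<Rightarrow> 3) - card (neg ` A)" unfolding S_def
      by (rule card_Diff_subset) auto
    also have "card (neg ` A) = card A" using inj_neg by (metis card_image inj_on_subset subset_UNIV)
    finally show ?thesis unfolding N_def by (simp add: card_fun3)
  qed
  moreover obtain P where P: "P \<in> W" "VS.dim W \<le> card {x. P x \<noteq> 0}"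
    using support_exists[OF Ws] by blast
  moreover have "card {x. P x \<noteq> 0} \<le> card (M N (d div 2)) * 2"
  proof -
    have PW0: "P \<in> W0" and van: "\<And>x. x \<in> S \<Longrightarrow> P x = 0" using P(1) unfolding W_def vanish_def by auto
    have sp: "splitp (d div 2) P" using PW0 unfolding W0_def by (rule span_splitp)
    have van': "\<And>x. x \<notin> neg ` A \<Longrightarrow> P x = 0" using van unfolding S_def by auto
    have "{x. P x \<noteq> 0} \<subseteq> neg ` {a\<in>A. P (neg a) \<noteq> 0}"
    proof
      fix x assume "x \<in> {x. P x \<noteq> 0}"
      then have "P x \<noteq> 0" by simp
      then have "x \<in> neg ` A" using van' by blast
      then obtain a where "a \<in> A" "x = neg a" by blast
      then show "x \<in> neg ` {a\<in>A. P (neg a) \<noteq> 0}" using \<open>P x \<noteq> 0\<close> by blast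
    qed
    then have "card {x. P x \<noteq> 0} \<le> card (neg ` {a\<in>A. P (neg a) \<noteq> 0})" by (intro card_mono) auto
    also have "\<dots> \<le> card {a\<in>A. P (neg a) \<noteq> 0}" by (rule card_image_le) simp
    also have "\<dots> \<le> 2 * card (Ef (d div 2) :: ('n \<Rightarrow> nat) set)"
      by (rule rank_bound[OF assms van' sp])
    finally show ?thesis unfolding N_def card_Ef_M by simp
  qed
  moreover have "card A \<le> 3 ^ N"
  proof -
    have "card A \<le> CARD('n \<Rightarrow> 3)" by (rule card_mono) auto
    then show ?thesis unfolding N_def card_fun3 .
  qed
  ultimately have ineq: "card (M N d) + card A \<le> 2 * card (M N (d div 2)) + 3 ^ N" by linarith
  have "int (card (M N d) + card A) \<le> int (2 * card (M N (d div 2)) + 3 ^ N)"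
    using ineq by (simp only: of_nat_le_iff)
  moreover have "int (2 * card (M N (d div 2)) + 3 ^ N) = 2 * int (card (M N (d div 2))) + 3 ^ N"
    by simp
  moreover have "int (card (M N d) + card A) = int (card (M N d)) + int (card A)" by simp
  ultimately show ?thesis unfolding N_def by linarith
qed

end
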